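(* Let $n \ge 2m \ge 2$ and let $J(n,m)$ be the Johnson graph, with intersection numbers $c_i = i^2$ and $b_i=(m-i)(n-m-i)$ for $i=0,1,\ldots,m$. Let $A$ and $D$ be its adjacency matrix and distance matrix (same vertex ordering). Let $k_j=\binom{m}{j}\binom{n-m}{j}$ for $j=0,1,\ldots,m$ and $s=\sum_{j=0}^{m} j k_j$. Define $$p(x)=s\left\{ \prod_{i=1}^m\frac{x-b_{i}+i}{b_{0}-b_{i}+i}- \frac{1}{n-1} \prod_{\substack{i=0\\ i\neq1}}^m \frac{x-b_{i}+i}{b_{1}-b_{i}+i-1}\right\}.$$ Then $D=p(A)$.
   Context: The Johnson graph $J(n,m)$ has as vertices all $m$-element subsets of an $n$-element set, two vertices being adjacent if and only if they intersect in exactly $m-1$ elements. The distance matrix of a connected graph has $(u,v)$ entry equal to the length of a shortest $u$–$v$ path. The intersection numbers of a distance regular graph: for vertices $x,y$ at distance $i$, $c_i$ (resp. $b_i$) is the number of neighbours of $y$ at distance $i-1$ (resp. $i+1$) from $x$. *)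

theory Defs
  imports Main "HOL-Computational_Algebra.Polynomial"
begin

definition johnson_vertices :: "nat \<Rightarrow> nat \<Rightarrow> nat set set" where
  "johnson_vertices n m = {X. X \<subseteq> {0..<n} \<and> card X = m}"

definition johnson_adj :: "nat \<Rightarrow> nat \<Rightarrow> nat set \<Rightarrow> nat set \<Rightarrow> bool" where
  "johnson_adj n m X Y \<longleftrightarrow> X \<in> johnson_vertices n m \<and> Y \<in> johnson_vertices n m
      \<and> card (X \<inter> Y) = m - 1"

definition johnson_dist :: "nat \<Rightarrow> nat \<Rightarrow> nat set \<Rightarrow> nat set \<Rightarrow> nat" where
  "johnson_dist n m X Y = (LEAST k. (johnson_adj n m ^^ k) X Y)"

definition adj_matrix :: "nat \<Rightarrow> nat \<Rightarrow> nat set \<Rightarrow> nat set \<Rightarrow> real" where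
  "adj_matrix n m X Y = (if johnson_adj n m X Y then 1 else 0)"

definition dist_matrix :: "nat \<Rightarrow> nat \<Rightarrow> nat set \<Rightarrow> nat set \<Rightarrow> real" where
  "dist_matrix n m X Y = real (johnson_dist n m X Y)"

definition mat_mult :: "'v set \<Rightarrow> ('v \<Rightarrow> 'v \<Rightarrow> real) \<Rightarrow> ('v \<Rightarrow> 'v \<Rightarrow> real) \<Rightarrow> 'v \<Rightarrow> 'v \<Rightarrow> real" where
  "mat_mult V A B = (\<lambda>u v. \<Sum>w\<in>V. A u w * B w v)"

definition mat_id :: "'v \<Rightarrow> 'v \<Rightarrow> real" where
  "mat_id = (\<lambda>u v. if u = v then 1 else 0)"

fun mat_pow :: "'v set \<Rightarrow> ('v \<Rightarrow> 'v \<Rightarrow> real) \<Rightarrow> nat \<Rightarrow> 'v \<Rightarrow> 'v \<Rightarrow> real" where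
  "mat_pow V A 0 = mat_id"
| "mat_pow V A (Suc k) = mat_mult V (mat_pow V A k) A"

definition poly_mat :: "'v set \<Rightarrow> real poly \<Rightarrow> ('v \<Rightarrow> 'v \<Rightarrow> real) \<Rightarrow> 'v \<Rightarrow> 'v \<Rightarrow> real" where
  "poly_mat V p A = (\<lambda>u v. \<Sum>i\<le>degree p. coeff p i * mat_pow V A i u v)"

definition jb :: "nat \<Rightarrow> nat \<Rightarrow> nat \<Rightarrow> real" where
  "jb n m i = (real m - real i) * (real n - real m - real i)"

definition jk :: "nat \<Rightarrow> nat \<Rightarrow> nat \<Rightarrow> real" where
  "jk n m j = real (m choose j) * real ((n - m) choose j)"

definition js :: "nat \<Rightarrow> nat \<Rightarrow> real" where
  "js n m = (\<Sum>j=0..m. real j * jk n m j)"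

definition johnson_p :: "nat \<Rightarrow> nat \<Rightarrow> real poly" where
  "johnson_p n m = smult (js n m)
     ((\<Prod>i\<in>{1..m}. smult (1 / (jb n m 0 - jb n m i + real i)) [: real i - jb n m i, 1 :])
      - smult (1 / (real n - 1))
         (\<Prod>i\<in>{0..m} - {1}. smult (1 / (jb n m 1 - jb n m i + real i - 1)) [: real i - jb n m i, 1 :]))"

end

theory Submission
  imports Defs
begin


lemma poly_mat_sum:
  assumes "degree p \<le> N"
  shows "poly_mat V p A u v = (\<Sum>i\<le>N. coeff p i * mat_pow V A i u v)"
  unfolding poly_mat_def
  by (rule sum.mono_neutral_left) (use assms in \<open>auto simp: coeff_eq_0\<close>)

lemma poly_mat_add: "poly_mat V (p + q) A u v = poly_mat V p A u v + poly_mat V q A u v"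
proof -
  let ?N = "max (degree p) (degree q)"
  have "degree (p + q) \<le> ?N" by (simp add: degree_add_le)
  then have "poly_mat V (p + q) A u v = (\<Sum>i\<le>?N. coeff (p+q) i * mat_pow V A i u v)"
    by (rule poly_mat_sum)
  also have "\<dots> = (\<Sum>i\<le>?N. coeff p i * mat_pow V A i u v) + (\<Sum>i\<le>?N. coeff q i * mat_pow V A i u v)"
    by (simp add: distrib_right sum.distrib)
  also have "\<dots> = poly_mat V p A u v + poly_mat V q A u v"
    using poly_mat_sum[of p ?N V A u v] poly_mat_sum[of q ?N V A u v] by simp
  finally show ?thesis .
qed

lemma poly_mat_smult: "poly_mat V (smult c p) A u v = c * poly_mat V p A u v"
proof -
  have "poly_mat V (smult c p) A u v = (\<Sum>i\<le>degree p. coeff (smult c p) i * mat_pow V A i u v)"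
    by (rule poly_mat_sum) simp
  also have "\<dots> = c * poly_mat V p A u v"
    by (simp add: poly_mat_def sum_distrib_left mult.assoc)
  finally show ?thesis .
qed

lemma poly_mat_one: "poly_mat V 1 A u v = mat_id u v"
  by (simp add: poly_mat_def)

lemma poly_mat_pCons0:
  "poly_mat V (pCons 0 q) A u v = (\<Sum>w\<in>V. poly_mat V q A u w * A w v)"
proof -
  have "poly_mat V (pCons 0 q) A u v = (\<Sum>i\<le>Suc (degree q). coeff (pCons 0 q) i * mat_pow V A i u v)"
    by (rule poly_mat_sum) (simp add: degree_pCons_le)
  also have "\<dots> = (\<Sum>i\<le>degree q. coeff q i * mat_pow V A (Suc i) u v)"
    by (simp only: sum.atMost_Suc_shift) (simp add: coeff_pCons_Suc)
  also have "\<dots> = (\<Sum>i\<le>degree q. \<Sum>w\<in>V. coeff q i * (mat_pow V A i u w * A w v))"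
    by (simp add: mat_mult_def sum_distrib_left)
  also have "\<dots> = (\<Sum>w\<in>V. \<Sum>i\<le>degree q. coeff q i * mat_pow V A i u w * A w v)"
    by (subst sum.swap) (simp add: mult.assoc)
  also have "\<dots> = (\<Sum>w\<in>V. poly_mat V q A u w * A w v)"
    by (simp add: poly_mat_def sum_distrib_right)
  finally show ?thesis .
qed

lemma poly_mat_lin:
  "poly_mat V ([:c, 1:] * q) A u v = c * poly_mat V q A u v + (\<Sum>w\<in>V. poly_mat V q A u w * A w v)"
proof -
  have "[:c, 1:] * q = smult c q + pCons 0 q" by simp
  then show ?thesis by (simp add: poly_mat_add poly_mat_smult poly_mat_pCons0)
qed



lemma jv_fin: "X \<in> johnson_vertices n m \<Longrightarrow> finite X"
  unfolding johnson_vertices_def using finite_subset by blast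

lemma dist_lower:
  assumes "m \<ge> 1" "X \<in> johnson_vertices n m"
  shows "(johnson_adj n m ^^ k) X Y \<Longrightarrow> m \<le> card (X \<inter> Y) + k"
proof (induction k arbitrary: Y)
  case 0
  then show ?case using assms by (simp add: johnson_vertices_def)
next
  case (Suc k)
  then obtain Z where Z: "(johnson_adj n m ^^ k) X Z" "johnson_adj n m Z Y"
    using Suc.prems by (meson relpowp_Suc_E)
  have IH: "m \<le> card (X \<inter> Z) + k" using Suc.IH Z(1) .
  have ZV: "Z \<in> johnson_vertices n m" and YV: "Y \<in> johnson_vertices n m" and cZY: "card (Z \<inter> Y) = m - 1"
    using Z(2) unfolding johnson_adj_def by auto
  have fZ: "finite Z" "card Z = m" using ZV jv_fin[OF ZV] by (auto simp: johnson_vertices_def)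
  have fY: "finite Y" "card Y = m" using YV jv_fin[OF YV] by (auto simp: johnson_vertices_def)
  have "card (Z - Y) = card Z - card (Z \<inter> Y)"
    using fZ by (simp add: card_Diff_subset_Int)
  then have "card (Z - Y) = 1" using fZ cZY assms(1) by simp
  moreover have "X \<inter> Z \<subseteq> (X \<inter> Y) \<union> (Z - Y)" by blast
  then have "card (X \<inter> Z) \<le> card ((X \<inter> Y) \<union> (Z - Y))"
    using fY fZ by (intro card_mono) auto
  moreover have "card ((X \<inter> Y) \<union> (Z - Y)) \<le> card (X \<inter> Y) + card (Z - Y)"
    by (rule card_Un_le)
  ultimately show ?case using IH by simp
qed

lemma dist_upper:
  assumes "X \<in> johnson_vertices n m"
  shows "\<forall>Y\<in>johnson_vertices n m. m - card (X \<inter> Y) = d \<longrightarrow> (johnson_adj n m ^^ d) X Y"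
proof (induction d)
  case 0
  show ?case
  proof (intro ballI impI)
    fix Y assume Y: "Y \<in> johnson_vertices n m" and "m - card (X \<inter> Y) = 0"
    then have "card (X \<inter> Y) \<ge> card X" using assms by (simp add: johnson_vertices_def)
    then have "X \<inter> Y = X" using assms jv_fin[OF assms]
      by (metis Int_lower1 card_seteq)
    then have "X \<subseteq> Y" by blast
    moreover have "card X = card Y" using Y assms by (simp add: johnson_vertices_def)
    ultimately have "X = Y" using jv_fin[OF Y] card_subset_eq by blast
    then show "(johnson_adj n m ^^ 0) X Y" by simp
  qed
next
  case (Suc d)
  show ?case
  proof (intro ballI impI)
    fix Y assume Y: "Y \<in> johnson_vertices n m" and d: "m - card (X \<inter> Y) = Suc d"
    have fX: "finite X" "card X = m" "X \<subseteq> {0..<n}" using assms jv_fin[OF assms] by (auto simp: johnson_vertices_def)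
    have fY: "finite Y" "card Y = m" "Y \<subseteq> {0..<n}" using Y jv_fin[OF Y] by (auto simp: johnson_vertices_def)
    have "card (Y - X) = card Y - card (Y \<inter> X)"
      using fY by (simp add: card_Diff_subset_Int)
    moreover have "Y \<inter> X = X \<inter> Y" by blast
    ultimately have "card (Y - X) = m - card (X \<inter> Y)" using fY by simp
    then have "card (Y - X) \<noteq> 0" using d by simp
    then have "Y - X \<noteq> {}" by (metis card.empty)
    then obtain a where a: "a \<in> Y" "a \<notin> X" by blast
    have "card (X - Y) = m - card (X \<inter> Y)"
      using fX by (simp add: card_Diff_subset_Int)
    then have "card (X - Y) \<noteq> 0" using d by simp
    then have "X - Y \<noteq> {}" by (metis card.empty)
    then obtain b where b: "b \<in> X" "b \<notin> Y" by blast
    define Z where "Z = insert b (Y - {a})"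
    have fin: "finite (Y - {a})" using fY by auto
    have "b \<notin> Y - {a}" using b by simp
    then have "card Z = Suc (card (Y - {a}))" unfolding Z_def using fin by simp
    moreover have "card (Y - {a}) = m - 1" using fY a by simp
    moreover have "m \<ge> 1" using fY a by (metis card_0_eq empty_iff less_one not_le)
    ultimately have cZ: "card Z = m" by simp
    have "Z \<subseteq> {0..<n}" unfolding Z_def using fX(3) fY(3) b by blast
    then have Zv: "Z \<in> johnson_vertices n m" unfolding johnson_vertices_def using cZ by simp
    have "X \<inter> Z = insert b (X \<inter> Y)" unfolding Z_def using a b by auto
    then have cXZ: "card (X \<inter> Z) = Suc (card (X \<inter> Y))" using fX b by simp
    have "Z \<inter> Y = Y - {a}" unfolding Z_def using b by auto
    then have "card (Z \<inter> Y) = m - 1" using fY a by simp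
    then have adj: "johnson_adj n m Z Y" using Zv Y by (simp add: johnson_adj_def)
    have "m - card (X \<inter> Z) = d" using cXZ d by simp
    then have "(johnson_adj n m ^^ d) X Z" using Suc.IH Zv by blast
    then show "(johnson_adj n m ^^ Suc d) X Y" using adj by (meson relpowp_Suc_I)
  qed
qed

lemma dist_eq:
  assumes "m \<ge> 1" "X \<in> johnson_vertices n m" "Y \<in> johnson_vertices n m"
  shows "johnson_dist n m X Y = m - card (X \<inter> Y)"
  unfolding johnson_dist_def
proof (rule Least_equality)
  show "(johnson_adj n m ^^ (m - card (X \<inter> Y))) X Y" using dist_upper[OF assms(2)] assms(3) by blast
next
  fix k assume "(johnson_adj n m ^^ k) X Y"
  then show "m - card (X \<inter> Y) \<le> k" using dist_lower[OF assms(1,2)] by fastforce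
qed



lemma nbr_bij:
  assumes m1: "m \<ge> 1" and YV: "Y \<in> johnson_vertices n m"
  shows "bij_betw (\<lambda>(a,b). insert b (Y - {a})) (Y \<times> ({0..<n} - Y))
           {Z \<in> johnson_vertices n m. johnson_adj n m Z Y}"
proof -
  have fY: "finite Y" "card Y = m" "Y \<subseteq> {0..<n}" using YV jv_fin[OF YV] by (auto simp: johnson_vertices_def)
  show ?thesis
  proof (rule bij_betw_imageI)
    show "inj_on (\<lambda>(a,b). insert b (Y - {a})) (Y \<times> ({0..<n} - Y))"
    proof (rule inj_onI, clarify)
      fix a b a' b'
      assume a: "a \<in> Y" "b \<in> {0..<n}" "b \<notin> Y" "a' \<in> Y" "b' \<in> {0..<n}" "b' \<notin> Y"
        and eq: "insert b (Y - {a}) = insert b' (Y - {a'})"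
      have "b \<in> insert b' (Y - {a'})" using eq by blast
      then have bb: "b = b'" using a by blast
      have "a \<notin> insert b (Y - {a})" using a by blast
      then have "a \<notin> insert b' (Y - {a'})" using eq by simp
      then have "a = a'" using a by blast
      then show "a = a' \<and> b = b'" using bb by simp
    qed
  next
    show "(\<lambda>(a,b). insert b (Y - {a})) ` (Y \<times> ({0..<n} - Y)) = {Z \<in> johnson_vertices n m. johnson_adj n m Z Y}"
    proof (rule set_eqI, rule iffI)
      fix Z assume "Z \<in> (\<lambda>(a,b). insert b (Y - {a})) ` (Y \<times> ({0..<n} - Y))"
      then obtain a b where ab: "a \<in> Y" "b \<in> {0..<n}" "b \<notin> Y" and Z: "Z = insert b (Y - {a})" by blast
      have fin: "finite (Y - {a})" using fY by auto
      have "b \<notin> Y - {a}" using ab by simp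
      then have "card Z = Suc (card (Y - {a}))" unfolding Z using fin by simp
      moreover have "card (Y - {a}) = m - 1" using fY ab by simp
      ultimately have cZ: "card Z = m" using m1 by simp
      have "Z \<subseteq> {0..<n}" unfolding Z using fY(3) ab by blast
      then have Zv: "Z \<in> johnson_vertices n m" unfolding johnson_vertices_def using cZ by simp
      have "Z \<inter> Y = Y - {a}" unfolding Z using ab by auto
      then have "card (Z \<inter> Y) = m - 1" using fY ab by simp
      then show "Z \<in> {Z \<in> johnson_vertices n m. johnson_adj n m Z Y}"
        using Zv YV by (simp add: johnson_adj_def)
    next
      fix Z assume "Z \<in> {Z \<in> johnson_vertices n m. johnson_adj n m Z Y}"
      then have Zv: "Z \<in> johnson_vertices n m" and cZY: "card (Z \<inter> Y) = m - 1"
        by (auto simp: johnson_adj_def)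
      have fZ: "finite Z" "card Z = m" "Z \<subseteq> {0..<n}" using Zv jv_fin[OF Zv] by (auto simp: johnson_vertices_def)
      have "card (Y - Z) = card Y - card (Y \<inter> Z)" using fY by (simp add: card_Diff_subset_Int)
      moreover have "Y \<inter> Z = Z \<inter> Y" by blast
      ultimately have "card (Y - Z) = 1" using fY cZY m1 by simp
      then obtain a where a: "Y - Z = {a}" by (meson card_1_singletonE)
      have "card (Z - Y) = card Z - card (Z \<inter> Y)" using fZ by (simp add: card_Diff_subset_Int)
      then have "card (Z - Y) = 1" using fZ cZY m1 by simp
      then obtain b where b: "Z - Y = {b}" by (meson card_1_singletonE)
      have Zeq: "Z = insert b (Y - {a})" using a b by blast
      have "a \<in> Y" "b \<in> {0..<n}" "b \<notin> Y" using a b fZ(3) by auto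
      then show "Z \<in> (\<lambda>(a,b). insert b (Y - {a})) ` (Y \<times> ({0..<n} - Y))"
        using Zeq by blast
    qed
  qed
qed

lemma nbr_sum:
  assumes m1: "m \<ge> 1" and YV: "Y \<in> johnson_vertices n m"
  shows "(\<Sum>Z\<in>{Z \<in> johnson_vertices n m. johnson_adj n m Z Y}. f Z)
       = (\<Sum>a\<in>Y. \<Sum>b\<in>{0..<n} - Y. f (insert b (Y - {a})))"
proof -
  have "(\<Sum>Z\<in>{Z \<in> johnson_vertices n m. johnson_adj n m Z Y}. f Z)
      = (\<Sum>p\<in>Y \<times> ({0..<n} - Y). f ((\<lambda>(a,b). insert b (Y - {a})) p))"
    using sum.reindex_bij_betw[OF nbr_bij[OF assms], of f] by simp
  also have "\<dots> = (\<Sum>a\<in>Y. \<Sum>b\<in>{0..<n} - Y. f (insert b (Y - {a})))"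
    by (simp add: sum.cartesian_product split_def)
  finally show ?thesis .
qed



lemma nbr_count:
  fixes g :: "nat \<Rightarrow> real"
  assumes m1: "m \<ge> 1" and XV: "X \<in> johnson_vertices n m" and YV: "Y \<in> johnson_vertices n m"
  defines "j \<equiv> card (X \<inter> Y)" and "e \<equiv> card ({0..<n} - Y - X)"
  shows "(\<Sum>Z\<in>{Z \<in> johnson_vertices n m. johnson_adj n m Z Y}. g (card (X \<inter> Z)))
       = real j * real (m - j) * g j + real j * real e * g (j - 1)
         + real (m - j) * real (m - j) * g (Suc j) + real (m - j) * real e * g j"
proof -
  have fY: "finite Y" "card Y = m" "Y \<subseteq> {0..<n}" using YV jv_fin[OF YV] by (auto simp: johnson_vertices_def)
  have fX: "finite X" "card X = m" "X \<subseteq> {0..<n}" using XV jv_fin[OF XV] by (auto simp: johnson_vertices_def)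
  define U where "U = {0..<n}"
  have cYX: "card (Y \<inter> X) = j" unfolding j_def by (simp add: Int_commute)
  have cYmX: "card (Y - X) = m - j"
    using fY cYX by (simp add: card_Diff_subset_Int)
  have cXmY: "card (X - Y) = m - j"
    using fX by (simp add: card_Diff_subset_Int j_def)
  have jpos: "a \<in> Y \<inter> X \<Longrightarrow> j \<ge> 1" for a
    using fY cYX by (metis One_nat_def Suc_leI card_gt_0_iff empty_iff finite_Int)
  have inner: "(\<Sum>b\<in>U - Y. g (card (X \<inter> insert b (Y - {a}))))
     = real (m - j) * g (Suc (card (X \<inter> (Y - {a})))) + real e * g (card (X \<inter> (Y - {a})))"
    if a: "a \<in> Y" for a
  proof -
    have fin: "finite (U - Y)" unfolding U_def by simp
    have "(\<Sum>b\<in>U - Y. g (card (X \<inter> insert b (Y - {a}))))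
       = (\<Sum>b\<in>(U - Y) \<inter> X. g (card (X \<inter> insert b (Y - {a})))) + (\<Sum>b\<in>(U - Y) - X. g (card (X \<inter> insert b (Y - {a}))))"
      by (rule sum.Int_Diff[OF fin])
    also have "(\<Sum>b\<in>(U - Y) \<inter> X. g (card (X \<inter> insert b (Y - {a})))) = (\<Sum>b\<in>(U - Y) \<inter> X. g (Suc (card (X \<inter> (Y - {a})))))"
    proof (rule sum.cong[OF refl])
      fix b assume b: "b \<in> (U - Y) \<inter> X"
      then have "X \<inter> insert b (Y - {a}) = insert b (X \<inter> (Y - {a}))" by blast
      then show "g (card (X \<inter> insert b (Y - {a}))) = g (Suc (card (X \<inter> (Y - {a}))))"
        using b fX by simp
    qed
    also have "(\<Sum>b\<in>(U - Y) - X. g (card (X \<inter> insert b (Y - {a})))) = (\<Sum>b\<in>(U - Y) - X. g (card (X \<inter> (Y - {a}))))"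
    proof (rule sum.cong[OF refl])
      fix b assume b: "b \<in> (U - Y) - X"
      then have "X \<inter> insert b (Y - {a}) = X \<inter> (Y - {a})" by blast
      then show "g (card (X \<inter> insert b (Y - {a}))) = g (card (X \<inter> (Y - {a})))" by simp
    qed
    also have "(U - Y) \<inter> X = X - Y" unfolding U_def using fX by blast
    also have "(U - Y) - X = {0..<n} - Y - X" unfolding U_def by blast
    finally show ?thesis using cXmY by (simp add: e_def)
  qed
  have "(\<Sum>Z\<in>{Z \<in> johnson_vertices n m. johnson_adj n m Z Y}. g (card (X \<inter> Z)))
      = (\<Sum>a\<in>Y. \<Sum>b\<in>U - Y. g (card (X \<inter> insert b (Y - {a}))))"
    unfolding U_def by (rule nbr_sum[OF m1 YV])
  also have "\<dots> = (\<Sum>a\<in>Y. real (m - j) * g (Suc (card (X \<inter> (Y - {a})))) + real e * g (card (X \<inter> (Y - {a}))))"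
    by (rule sum.cong[OF refl]) (rule inner)
  also have "\<dots> = (\<Sum>a\<in>Y \<inter> X. real (m - j) * g (Suc (card (X \<inter> (Y - {a})))) + real e * g (card (X \<inter> (Y - {a}))))
                 + (\<Sum>a\<in>Y - X. real (m - j) * g (Suc (card (X \<inter> (Y - {a})))) + real e * g (card (X \<inter> (Y - {a}))))"
    by (rule sum.Int_Diff[OF fY(1)])
  also have "(\<Sum>a\<in>Y \<inter> X. real (m - j) * g (Suc (card (X \<inter> (Y - {a})))) + real e * g (card (X \<inter> (Y - {a}))))
      = (\<Sum>a\<in>Y \<inter> X. real (m - j) * g j + real e * g (j - 1))"
  proof (rule sum.cong[OF refl])
    fix a assume a: "a \<in> Y \<inter> X"
    have "X \<inter> (Y - {a}) = (X \<inter> Y) - {a}" by blast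
    then have c: "card (X \<inter> (Y - {a})) = j - 1" using a fX by (simp add: j_def)
    have "Suc (j - 1) = j" using jpos[OF a] by simp
    then show "real (m - j) * g (Suc (card (X \<inter> (Y - {a})))) + real e * g (card (X \<inter> (Y - {a})))
      = real (m - j) * g j + real e * g (j - 1)" using c by simp
  qed
  also have "(\<Sum>a\<in>Y - X. real (m - j) * g (Suc (card (X \<inter> (Y - {a})))) + real e * g (card (X \<inter> (Y - {a}))))
      = (\<Sum>a\<in>Y - X. real (m - j) * g (Suc j) + real e * g j)"
  proof (rule sum.cong[OF refl])
    fix a assume a: "a \<in> Y - X"
    have "X \<inter> (Y - {a}) = X \<inter> Y" using a by blast
    then show "real (m - j) * g (Suc (card (X \<inter> (Y - {a})))) + real e * g (card (X \<inter> (Y - {a})))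
      = real (m - j) * g (Suc j) + real e * g j" by (simp add: j_def)
  qed
  finally show ?thesis using cYX cYmX by (simp add: algebra_simps)
qed

lemma card_outside:
  assumes XV: "X \<in> johnson_vertices n m" and YV: "Y \<in> johnson_vertices n m"
  shows "card ({0..<n} - Y - X) = n + card (X \<inter> Y) - 2 * m"
    and "2 * m \<le> n + card (X \<inter> Y)"
proof -
  have fY: "finite Y" "card Y = m" "Y \<subseteq> {0..<n}" using YV jv_fin[OF YV] by (auto simp: johnson_vertices_def)
  have fX: "finite X" "card X = m" "X \<subseteq> {0..<n}" using XV jv_fin[OF XV] by (auto simp: johnson_vertices_def)
  have u: "card (X \<union> Y) + card (X \<inter> Y) = 2 * m" using card_Un_Int[OF fX(1) fY(1)] fX fY by simp
  have "{0..<n} - Y - X = {0..<n} - (X \<union> Y)" by blast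
  moreover have "card ({0..<n} - (X \<union> Y)) = n - card (X \<union> Y)"
    using fX fY by (subst card_Diff_subset) auto
  moreover have "card (X \<union> Y) \<le> n" using fX fY
    by (metis card_atLeastLessThan card_mono finite_atLeastLessThan le_sup_iff minus_nat.diff_0)
  ultimately show "card ({0..<n} - Y - X) = n + card (X \<inter> Y) - 2 * m"
    and "2 * m \<le> n + card (X \<inter> Y)" using u by auto
qed



lemma binid:
  fixes j m n t :: nat
  assumes t1: "1 \<le> t" and jm: "j \<le> m" and jn: "2 * m \<le> n + j"
  shows "real j * real (m - j) * real (j choose t) + real j * real (n + j - 2 * m) * real ((j - 1) choose t)
         + real (m - j) * real (m - j) * real (Suc j choose t) + real (m - j) * real (n + j - 2 * m) * real (j choose t)
       = (jb n m t - real t) * real (j choose t) + (real m - real t + 1)^2 * real (j choose (t - 1))"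
proof -
  obtain t' where tt: "t = Suc t'" using t1 by (cases t) auto
  have e: "real (n + j - 2 * m) = real n + real j - 2 * real m" using jn by (simp add: of_nat_diff)
  have mj: "real (m - j) = real m - real j" using jm by (simp add: of_nat_diff)
  show ?thesis
  proof (cases "t \<le> j")
    case True
    define x where "x = real (j choose t')"
    define y where "y = real (j choose t)"
    have h1n: "t * (j choose t) = (j - t') * (j choose t')"
      using binomial_absorption[of t' j] binomial_absorb_comp[of j t'] tt by simp
    have h1: "real t * y = (real j - real t + 1) * x"
    proof -
      have "real (t * (j choose t)) = real ((j - t') * (j choose t'))" using h1n by simp
      then show ?thesis using True tt by (simp add: x_def y_def of_nat_diff algebra_simps)
    qed
    have h2n: "(j - t) * (j choose t) = j * ((j - 1) choose t)" by (rule binomial_absorb_comp)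
    have h2: "real j * real ((j - 1) choose t) = (real j - real t) * y"
    proof -
      have "real ((j - t) * (j choose t)) = real (j * ((j - 1) choose t))" using h2n by simp
      then show ?thesis using True by (simp add: y_def of_nat_diff)
    qed
    have h3: "real (Suc j choose t) = x + y" using tt by (simp add: x_def y_def)
    define K where "K = real j * (real m - real j) + (real n + real j - 2 * real m) * (real j - real t)
        + (real m - real j)^2 + (real m - real j) * (real n + real j - 2 * real m) - (jb n m t - real t)"
    have poly: "K * (real j - real t + 1) = real t * ((real m - real t + 1)^2 - (real m - real j)^2)"
      unfolding K_def jb_def by (simp add: algebra_simps power2_eq_square)
    have "real t * (K * y) = real t * (((real m - real t + 1)^2 - (real m - real j)^2) * x)"
    proof -
      have "real t * (K * y) = K * (real t * y)" by (simp add: algebra_simps)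
      also have "\<dots> = K * (real j - real t + 1) * x" using h1 by simp
      also have "\<dots> = real t * (((real m - real t + 1)^2 - (real m - real j)^2) * x)" using poly by simp
      finally show ?thesis .
    qed
    then have Ky: "K * y = ((real m - real t + 1)^2 - (real m - real j)^2) * x" using t1 by simp
    have lhs: "real j * real (m - j) * y + real j * real (n + j - 2 * m) * real ((j - 1) choose t)
         + real (m - j) * real (m - j) * real (Suc j choose t) + real (m - j) * real (n + j - 2 * m) * y
       = (K + (jb n m t - real t)) * y + (real m - real j)^2 * x"
    proof -
      have "real j * real (n + j - 2 * m) * real ((j - 1) choose t) = real (n + j - 2 * m) * (real j * real ((j - 1) choose t))"
        by simp
      also have "\<dots> = real (n + j - 2 * m) * ((real j - real t) * y)" using h2 by simp
      finally have a: "real j * real (n + j - 2 * m) * real ((j - 1) choose t) = real (n + j - 2 * m) * ((real j - real t) * y)" .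
      show ?thesis unfolding a unfolding h3 e mj K_def by (simp add: algebra_simps power2_eq_square)
    qed
    have gy: "real (j choose t) = y" by (simp add: y_def)
    have gx: "real (j choose (t - 1)) = x" using tt by (simp add: x_def)
    have fin: "(K + (jb n m t - real t)) * y + (real m - real j)^2 * x
       = (jb n m t - real t) * y + (real m - real t + 1)^2 * x"
    proof -
      have "(K + (jb n m t - real t)) * y + (real m - real j)^2 * x
         = K * y + (jb n m t - real t) * y + (real m - real j)^2 * x" by (simp add: distrib_right)
      also have "\<dots> = (jb n m t - real t) * y + (real m - real t + 1)^2 * x" unfolding Ky by (simp add: algebra_simps)
      finally show ?thesis .
    qed
    show ?thesis unfolding gy gx lhs fin ..
  next
    case False
    then have y0: "j choose t = 0" and z0: "(j - 1) choose t = 0" by auto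
    show ?thesis
    proof (cases "t = Suc j")
      case True
      then show ?thesis using mj by (simp add: power2_eq_square binomial_eq_0)
    next
      case False
      then have "Suc j choose t = 0" "j choose (t - 1) = 0" using \<open>\<not> t \<le> j\<close> by auto
      then show ?thesis using \<open>\<not> t \<le> j\<close> False by (simp add: binomial_eq_0)
    qed
  qed
qed



lemma js_eq:
  assumes "m \<ge> 1" "m \<le> n"
  shows "js n m = real m * real ((n - 1) choose m)"
proof -
  have tm: "j * (m choose j) = m * ((m - 1) choose (m - j))" if "j \<le> m" for j
  proof (cases j)
    case 0
    then show ?thesis using assms by (simp add: binomial_eq_0)
  next
    case (Suc k)
    then have "j * (m choose j) = m * ((m - 1) choose k)" using binomial_absorption[of k m] by simp
    also have "(m - 1) choose k = (m - 1) choose ((m - 1) - k)"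
      using Suc that by (intro binomial_symmetric) simp
    also have "(m - 1) - k = m - j" using Suc by simp
    finally show ?thesis .
  qed
  have "(\<Sum>j=0..m. j * ((m choose j) * ((n - m) choose j))) = (\<Sum>j\<le>m. ((n - m) choose j) * (m * ((m - 1) choose (m - j))))"
    by (rule sum.cong) (auto simp: tm atLeast0AtMost mult.assoc[symmetric] mult.commute)
  also have "\<dots> = m * (\<Sum>j\<le>m. ((n - m) choose j) * ((m - 1) choose (m - j)))"
    by (simp add: sum_distrib_left algebra_simps)
  also have "\<dots> = m * ((n - 1) choose m)"
    using vandermonde[of "n - m" "m - 1" m] assms by simp
  finally have nat: "(\<Sum>j=0..m. j * ((m choose j) * ((n - m) choose j))) = m * ((n - 1) choose m)" .
  have "js n m = real (\<Sum>j=0..m. j * ((m choose j) * ((n - m) choose j)))"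
    unfolding js_def jk_def by simp
  then show ?thesis using nat by simp
qed

lemma fact_choose_prod:
  "m \<le> n - 1 \<Longrightarrow> real (fact m) * real ((n - 1) choose m) = (\<Prod>i\<in>{1..m}. real n - real i)"
proof (induction m)
  case 0
  then show ?case by simp
next
  case (Suc m)
  have "Suc m * ((n - 1) choose Suc m) = (n - 1) * ((n - 1 - 1) choose m)" by (rule binomial_absorption)
  also have "\<dots> = (n - 1 - m) * ((n - 1) choose m)" by (rule binomial_absorb_comp[symmetric])
  finally have a: "real (Suc m) * real ((n - 1) choose Suc m) = real (n - 1 - m) * real ((n - 1) choose m)"
    by (metis of_nat_mult)
  have b: "real (n - 1 - m) = real n - real (Suc m)" using Suc.prems by (simp add: of_nat_diff)
  have "real (fact (Suc m)) * real ((n - 1) choose Suc m) = real (fact m) * (real (Suc m) * real ((n - 1) choose Suc m))"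
    by (simp add: algebra_simps)
  also have "\<dots> = (real (fact m) * real ((n - 1) choose m)) * (real n - real (Suc m))"
    unfolding a b by (simp add: algebra_simps)
  also have "\<dots> = (\<Prod>i\<in>{1..m}. real n - real i) * (real n - real (Suc m))"
    using Suc by simp
  also have "\<dots> = (\<Prod>i\<in>{1..Suc m}. real n - real i)"
    by (simp add: prod.nat_ivl_Suc' mult.commute)
  finally show ?case .
qed

lemma prod_shift1:
  "(\<Prod>i\<in>{1..Suc m}. real n - real i + 1) = real n * (\<Prod>i\<in>{1..m}. real n - real i)"
proof (induction m)
  case 0
  then show ?case by simp
next
  case (Suc m)
  have "(\<Prod>i\<in>{1..Suc (Suc m)}. real n - real i + 1) = (real n - real (Suc (Suc m)) + 1) * (\<Prod>i\<in>{1..Suc m}. real n - real i + 1)"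
    by (simp add: prod.nat_ivl_Suc')
  also have "\<dots> = real n * (\<Prod>i\<in>{1..Suc m}. real n - real i)"
    unfolding Suc by (simp add: prod.nat_ivl_Suc' algebra_simps)
  finally show ?case .
qed

lemma prod_fact1: "(\<Prod>i\<in>{1..m}. real i) = real (fact m)"
  by (simp add: fact_prod)

lemma prod_fact2: "(\<Prod>i\<in>{2..Suc m}. real i - 1) = real (fact m)"
proof (induction m)
  case 0
  then show ?case by simp
next
  case (Suc m)
  then show ?case by (simp add: prod.nat_ivl_Suc' algebra_simps)
qed



lemma adj_sum:
  assumes "m \<ge> 1" "X \<in> johnson_vertices n m" "Y \<in> johnson_vertices n m" "1 \<le> t" "t \<le> m"
  shows "(\<Sum>w\<in>johnson_vertices n m. real (card (X \<inter> w) choose t) * adj_matrix n m w Y)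
       = (jb n m t - real t) * real (card (X \<inter> Y) choose t) + (real m - real t + 1)^2 * real (card (X \<inter> Y) choose (t - 1))"
proof -
  have fin: "finite (johnson_vertices n m)" unfolding johnson_vertices_def
    by (rule finite_subset[of _ "Pow {0..<n}"]) auto
  have "(\<Sum>w\<in>johnson_vertices n m. real (card (X \<inter> w) choose t) * adj_matrix n m w Y)
      = (\<Sum>w\<in>johnson_vertices n m. if johnson_adj n m w Y then real (card (X \<inter> w) choose t) else 0)"
    by (rule sum.cong) (auto simp: adj_matrix_def)
  also have "\<dots> = (\<Sum>w\<in>{w \<in> johnson_vertices n m. johnson_adj n m w Y}. real (card (X \<inter> w) choose t))"
    by (rule sum.inter_filter[OF fin, symmetric])
  also have "\<dots> = real (card (X \<inter> Y)) * real (m - card (X \<inter> Y)) * real (card (X \<inter> Y) choose t)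
      + real (card (X \<inter> Y)) * real (card ({0..<n} - Y - X)) * real ((card (X \<inter> Y) - 1) choose t)
      + real (m - card (X \<inter> Y)) * real (m - card (X \<inter> Y)) * real (Suc (card (X \<inter> Y)) choose t)
      + real (m - card (X \<inter> Y)) * real (card ({0..<n} - Y - X)) * real (card (X \<inter> Y) choose t)"
    using nbr_count[OF assms(1-3), where g = "\<lambda>k. real (k choose t)"] by simp
  also have "\<dots> = (jb n m t - real t) * real (card (X \<inter> Y) choose t) + (real m - real t + 1)^2 * real (card (X \<inter> Y) choose (t - 1))"
  proof -
    have cX: "card X = m" using assms(2) by (simp add: johnson_vertices_def)
    have jm: "card (X \<inter> Y) \<le> m" unfolding cX[symmetric]
      by (rule card_mono[OF jv_fin[OF assms(2)]]) blast
    show ?thesis unfolding card_outside(1)[OF assms(2,3)]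
      by (rule binid[OF assms(4) jm card_outside(2)[OF assms(2,3)]])
  qed
  finally show ?thesis .
qed

lemma Qlem:
  assumes m1: "m \<ge> 1"
  shows "d \<le> m - 1 \<Longrightarrow> \<forall>X\<in>johnson_vertices n m. \<forall>Y\<in>johnson_vertices n m.
     poly_mat (johnson_vertices n m) (\<Prod>i\<in>{m - d + 1..m}. [: real i - jb n m i, 1 :]) (adj_matrix n m) X Y
       = real (fact d)^2 * real (card (X \<inter> Y) choose (m - d))"
proof (induction d)
  case 0
  show ?case
  proof (intro ballI)
    fix X Y assume XV: "X \<in> johnson_vertices n m" and YV: "Y \<in> johnson_vertices n m"
    have fX: "finite X" "card X = m" using XV jv_fin[OF XV] by (auto simp: johnson_vertices_def)
    have fY: "finite Y" "card Y = m" using YV jv_fin[OF YV] by (auto simp: johnson_vertices_def)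
    have "card (X \<inter> Y) choose m = (if X = Y then 1 else 0)"
    proof (cases "X = Y")
      case True then show ?thesis using fX by simp
    next
      case False
      have le: "card (X \<inter> Y) \<le> m" using fX by (metis Int_lower1 card_mono)
      have "card (X \<inter> Y) \<noteq> m"
      proof
        assume c: "card (X \<inter> Y) = m"
        have "X \<inter> Y = X" using c fX by (metis Int_lower1 card_subset_eq)
        moreover have "X \<inter> Y = Y" using c fY by (metis Int_lower2 card_subset_eq)
        ultimately show False using False by simp
      qed
      then show ?thesis using le False by (simp add: binomial_eq_0)
    qed
    then show "poly_mat (johnson_vertices n m) (\<Prod>i\<in>{m - 0 + 1..m}. [: real i - jb n m i, 1 :]) (adj_matrix n m) X Y
       = real (fact 0)^2 * real (card (X \<inter> Y) choose (m - 0))"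
      by (simp add: poly_mat_one mat_id_def)
  qed
next
  case (Suc d)
  define t where "t = m - d"
  have t2: "t \<ge> 2" "t \<le> m" using Suc.prems m1 unfolding t_def by auto
  have IH: "\<forall>X\<in>johnson_vertices n m. \<forall>Y\<in>johnson_vertices n m.
     poly_mat (johnson_vertices n m) (\<Prod>i\<in>{t + 1..m}. [: real i - jb n m i, 1 :]) (adj_matrix n m) X Y
       = real (fact d)^2 * real (card (X \<inter> Y) choose t)"
    using Suc.IH Suc.prems unfolding t_def by simp
  have set: "{m - Suc d + 1..m} = insert t {t + 1..m}" using t2 Suc.prems unfolding t_def by auto
  have prod: "(\<Prod>i\<in>{m - Suc d + 1..m}. [: real i - jb n m i, 1 :])
      = [: real t - jb n m t, 1 :] * (\<Prod>i\<in>{t + 1..m}. [: real i - jb n m i, 1 :])"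
    unfolding set by (subst prod.insert) auto
  show ?case
  proof (intro ballI)
    fix X Y assume XV: "X \<in> johnson_vertices n m" and YV: "Y \<in> johnson_vertices n m"
    let ?Q = "poly_mat (johnson_vertices n m) (\<Prod>i\<in>{t + 1..m}. [: real i - jb n m i, 1 :]) (adj_matrix n m)"
    have "(\<Sum>w\<in>johnson_vertices n m. ?Q X w * adj_matrix n m w Y)
        = (\<Sum>w\<in>johnson_vertices n m. real (fact d)^2 * (real (card (X \<inter> w) choose t) * adj_matrix n m w Y))"
      by (rule sum.cong) (use IH XV in auto)
    also have "\<dots> = real (fact d)^2 * ((jb n m t - real t) * real (card (X \<inter> Y) choose t) + (real m - real t + 1)^2 * real (card (X \<inter> Y) choose (t - 1)))"
    proof -
      have A: "(\<Sum>w\<in>johnson_vertices n m. real (card (X \<inter> w) choose t) * adj_matrix n m w Y)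
       = (jb n m t - real t) * real (card (X \<inter> Y) choose t) + (real m - real t + 1)^2 * real (card (X \<inter> Y) choose (t - 1))"
        by (rule adj_sum[OF m1 XV YV _ t2(2)]) (use t2 in simp)
      show ?thesis unfolding sum_distrib_left[symmetric] A ..
    qed
    finally have S: "(\<Sum>w\<in>johnson_vertices n m. ?Q X w * adj_matrix n m w Y) = \<dots>" .
    have mt: "real m - real t + 1 = real (Suc d)" using t2 Suc.prems unfolding t_def by (simp add: of_nat_diff)
    have tt: "t - 1 = m - Suc d" unfolding t_def by simp
    show "poly_mat (johnson_vertices n m) (\<Prod>i\<in>{m - Suc d + 1..m}. [: real i - jb n m i, 1 :]) (adj_matrix n m) X Y
       = real (fact (Suc d))^2 * real (card (X \<inter> Y) choose (m - Suc d))"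
      unfolding prod poly_mat_lin S using IH XV YV mt tt
      by (simp add: algebra_simps power2_eq_square)
  qed
qed



lemma poly_mat_diff: "poly_mat V (p - q) A u v = poly_mat V p A u v - poly_mat V q A u v"
proof -
  have "p - q = p + smult (-1) q" by simp
  then have "poly_mat V (p - q) A u v = poly_mat V (p + smult (-1) q) A u v" by simp
  also have "\<dots> = poly_mat V p A u v - poly_mat V q A u v"
    unfolding poly_mat_add poly_mat_smult by simp
  finally show ?thesis .
qed

theorem theorem3p1:
  fixes n m :: nat
  assumes "n \<ge> 2 * m" and "2 * m \<ge> 2"
  shows "\<forall>X\<in>johnson_vertices n m. \<forall>Y\<in>johnson_vertices n m.
           dist_matrix n m X Y
             = poly_mat (johnson_vertices n m) (johnson_p n m) (adj_matrix n m) X Y"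
proof (intro ballI)
  fix X Y assume XV: "X \<in> johnson_vertices n m" and YV: "Y \<in> johnson_vertices n m"
  have m1: "m \<ge> 1" using assms by simp
  have mn: "m < n" using assms by simp
  let ?V = "johnson_vertices n m"
  let ?A = "adj_matrix n m"
  define fl where "fl = (\<lambda>i. [: real i - jb n m i, 1 :])"
  define q where "q = (\<Prod>i\<in>{2..m}. fl i)"
  define j where "j = card (X \<inter> Y)"
  define c where "c = real (fact (m - 1))^2"
  have Q: "poly_mat ?V q ?A U W = c * real (card (U \<inter> W))" if "U \<in> ?V" "W \<in> ?V" for U W
  proof -
    have e: "m - (m - 1) + 1 = 2" "m - (m - 1) = 1" using m1 by auto
    have "\<forall>X\<in>johnson_vertices n m. \<forall>Y\<in>johnson_vertices n m.
     poly_mat (johnson_vertices n m) (\<Prod>i\<in>{m - (m - 1) + 1..m}. [: real i - jb n m i, 1 :]) (adj_matrix n m) X Y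
       = real (fact (m - 1))^2 * real (card (X \<inter> Y) choose (m - (m - 1)))"
      by (rule Qlem[OF m1]) simp
    then have "\<forall>X\<in>johnson_vertices n m. \<forall>Y\<in>johnson_vertices n m.
     poly_mat (johnson_vertices n m) (\<Prod>i\<in>{2..m}. [: real i - jb n m i, 1 :]) (adj_matrix n m) X Y
       = real (fact (m - 1))^2 * real (card (X \<inter> Y))"
      unfolding e(2) one_add_one choose_one .
    then show ?thesis using that unfolding q_def fl_def c_def by blast
  qed
  have L: "poly_mat ?V (fl k * q) ?A X Y = (real k - jb n m k) * c * real j + c * ((jb n m 1 - 1) * real j + real m ^ 2)" for k
  proof -
    have "(\<Sum>w\<in>?V. poly_mat ?V q ?A X w * ?A w Y) = (\<Sum>w\<in>?V. c * (real (card (X \<inter> w) choose 1) * ?A w Y))"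
      by (rule sum.cong) (use Q XV in auto)
    also have "\<dots> = c * ((jb n m 1 - real 1) * real (card (X \<inter> Y) choose 1) + (real m - real 1 + 1)^2 * real (card (X \<inter> Y) choose (1 - 1)))"
      unfolding sum_distrib_left[symmetric] using adj_sum[OF m1 XV YV, of 1] m1 by simp
    finally have S: "(\<Sum>w\<in>?V. poly_mat ?V q ?A X w * ?A w Y) = c * ((jb n m 1 - 1) * real j + real m ^ 2)"
      by (simp add: j_def)
    show ?thesis unfolding fl_def poly_mat_lin S using Q[OF XV YV] by (simp add: j_def)
  qed
  define P0 where "P0 = (\<Prod>i\<in>{1..m}. jb n m 0 - jb n m i + real i)"
  define P1 where "P1 = (\<Prod>i\<in>{0..m} - {1}. jb n m 1 - jb n m i + real i - 1)"
  have s1: "{1..m} = insert 1 {2..m}" using m1 by auto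
  have s2: "{0..m} - {1} = insert 0 {2..m}" by auto
  have pe: "johnson_p n m = smult (js n m) (smult (1 / P0) (fl 1 * q) - smult (1 / (real n - 1)) (smult (1 / P1) (fl 0 * q)))"
  proof -
    have pr1: "(\<Prod>i\<in>{1..m}. [: real i - jb n m i, 1 :]) = fl 1 * q"
      unfolding fl_def q_def s1 by (subst prod.insert) auto
    have pr2: "(\<Prod>i\<in>{0..m} - {1}. [: real i - jb n m i, 1 :]) = fl 0 * q"
      unfolding fl_def q_def s2 by (subst prod.insert) auto
    have pc1: "(\<Prod>i\<in>{1..m}. 1 / (jb n m 0 - jb n m i + real i)) = 1 / P0"
      unfolding P0_def by (simp add: prod_dividef)
    have pc2: "(\<Prod>i\<in>{0..m} - {1}. 1 / (jb n m 1 - jb n m i + real i - 1)) = 1 / P1"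
      unfolding P1_def by (simp add: prod_dividef)
    show ?thesis unfolding johnson_p_def prod_smult pr1 pr2 pc1 pc2 ..
  qed
  have val: "poly_mat ?V (johnson_p n m) ?A X Y
     = js n m * (1 / P0 * (c * real m ^ 2) - 1 / (real n - 1) * (1 / P1 * (c * (real m ^ 2 - real n * real j))))"
  proof -
    have a: "(real 1 - jb n m 1) * c * real j + c * ((jb n m 1 - 1) * real j + real m ^ 2) = c * real m ^ 2"
      by (simp add: algebra_simps)
    have b: "(real 0 - jb n m 0) * c * real j + c * ((jb n m 1 - 1) * real j + real m ^ 2) = c * (real m ^ 2 - real n * real j)"
      by (simp add: jb_def algebra_simps)
    show ?thesis unfolding pe poly_mat_smult poly_mat_diff L a b ..
  qed
  define F where "F = real (fact (m - 1))"
  define g where "g = (\<Prod>i\<in>{2..m}. real n - real i)"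
  define G where "G = (\<lambda>k. \<Prod>i\<in>{1..k}. real n - real i)"
  define C where "C = real ((n - 1) choose m)"
  have cF: "c = F^2" unfolding c_def F_def by simp
  obtain k where km: "m = Suc k" using m1 by (cases m) auto
  have fm: "real (fact m) = real m * F" unfolding F_def km by (simp add: algebra_simps)
  have sC: "js n m = real m * C" unfolding C_def by (rule js_eq) (use m1 mn in auto)
  have GmC: "real (fact m) * C = G m" unfolding C_def G_def by (rule fact_choose_prod) (use mn in auto)
  have Gg: "G m = (real n - 1) * g" unfolding G_def g_def s1 by (subst prod.insert) auto
  have Gm: "G m = G (m - 1) * (real n - real m)" unfolding G_def km
    by (simp add: prod.nat_ivl_Suc' mult.commute)
  have P0e: "P0 = real (fact m) * (real n * G (m - 1))"
  proof -
    have "P0 = (\<Prod>i\<in>{1..m}. real i * (real n - real i + 1))"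
      unfolding P0_def by (rule prod.cong) (auto simp: jb_def algebra_simps)
    also have "\<dots> = (\<Prod>i\<in>{1..m}. real i) * (\<Prod>i\<in>{1..m}. real n - real i + 1)"
      by (rule prod.distrib)
    also have "(\<Prod>i\<in>{1..m}. real n - real i + 1) = real n * G (m - 1)"
      using prod_shift1[where m=k and n=n] unfolding G_def km by simp
    finally show ?thesis using prod_fact1[of m] by simp
  qed
  have P1e: "P1 = - real n * (F * g)"
  proof -
    have "P1 = (jb n m 1 - jb n m 0 + real 0 - 1) * (\<Prod>i\<in>{2..m}. jb n m 1 - jb n m i + real i - 1)"
      unfolding P1_def s2 by (subst prod.insert) auto
    also have "jb n m 1 - jb n m 0 + real 0 - 1 = - real n" by (simp add: jb_def algebra_simps)
    also have "(\<Prod>i\<in>{2..m}. jb n m 1 - jb n m i + real i - 1) = (\<Prod>i\<in>{2..m}. (real i - 1) * (real n - real i))"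
      by (rule prod.cong) (auto simp: jb_def algebra_simps)
    also have "\<dots> = (\<Prod>i\<in>{2..m}. real i - 1) * g" unfolding g_def by (rule prod.distrib)
    also have "(\<Prod>i\<in>{2..m}. real i - 1) = F"
      using prod_fact2[where m=k] unfolding F_def km by simp
    finally show ?thesis by simp
  qed
  have Fnz: "F \<noteq> 0" unfolding F_def by simp
  have gnz: "g \<noteq> 0" unfolding g_def using mn by (simp add: prod_zero_iff)
  have Gnz: "G (m - 1) \<noteq> 0" unfolding G_def using mn by (simp add: prod_zero_iff)
  have n1: "real n - 1 \<noteq> 0" "real n \<noteq> 0" using mn m1 by auto
  have mCF: "real m * C * F = (real n - 1) * g" using GmC Gg fm by (simp add: algebra_simps)
  have dist: "dist_matrix n m X Y = real m - real j"
    unfolding dist_matrix_def dist_eq[OF m1 XV YV] j_def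
  proof -
    have cX: "card X = m" using XV by (simp add: johnson_vertices_def)
    have "card (X \<inter> Y) \<le> m" unfolding cX[symmetric]
      by (rule card_mono[OF jv_fin[OF XV]]) blast
    then show "real (m - card (X \<inter> Y)) = real m - real (card (X \<inter> Y))" by (simp add: of_nat_diff)
  qed
  have H1: "js n m * c / ((real n - 1) * P1) = - 1 / real n"
  proof -
    have "js n m * c = (real m * C * F) * F" by (simp add: sC cF power2_eq_square algebra_simps)
    also have "\<dots> = (real n - 1) * F * g" unfolding mCF by (simp add: algebra_simps)
    finally have sc: "js n m * c = (real n - 1) * F * g" .
    show ?thesis unfolding sc P1e using Fnz gnz n1 by (simp add: field_simps)
  qed
  have H2: "js n m * c * real m ^ 2 / P0 = real m * (real n - real m) / real n"
  proof -
    have "js n m * c * real m ^ 2 = (real m * C * F) * F * real m * real m" unfolding sC cF by (simp add: power2_eq_square algebra_simps)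
    also have "\<dots> = G m * F * real m * real m" using GmC fm by (simp add: algebra_simps)
    finally have e1: "js n m * c * real m ^ 2 = G m * F * real m * real m" .
    show ?thesis unfolding e1 P0e fm Gm using Fnz Gnz n1 m1 by (simp add: field_simps)
  qed
  have "js n m * (1 / P0 * (c * real m ^ 2) - 1 / (real n - 1) * (1 / P1 * (c * (real m ^ 2 - real n * real j))))
      = js n m * c * real m ^ 2 / P0 - js n m * c / ((real n - 1) * P1) * (real m ^ 2 - real n * real j)"
    by (simp add: field_simps)
  also have "\<dots> = real m - real j" unfolding H1 H2 using n1 by (simp add: field_simps power2_eq_square)
  finally show "dist_matrix n m X Y = poly_mat ?V (johnson_p n m) ?A X Y" using val dist by simp
qed

end
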